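(* Let ${\cal P}={\cal P}_{in}\cup{\cal P}_{out}$, let $\gamma$ be an assumption formula, let $D$ be a flagging monitor over $2^{{\cal P}_{in}}$, and let $\pi=\gamma\rightarrow\pi'$ where either $\pi'=D{:}\phi$ with $\phi$ an LTL formula (simple trigger), or $\pi'=(D;\varphi)^*$ with $\varphi$ a co-safety LTL formula (repeating trigger). Let $t(\pi)$ denote $\gamma\rightarrow\phi$ in the first case and $\gamma\rightarrow\varphi$ in the second. Let $C_{t(\pi)}$ be a Mealy machine that realises $t(\pi)$ in the simple-trigger case, and that tightly realises $t(\pi)$ in the repeating-trigger case. Then there is a Mealy machine (built from $D$ and $C_{t(\pi)}$) that realises $\pi$.
   Context: Traces $\sigma=\sigma_0\sigma_1\cdots$ have letters $\sigma_i\subseteq{\cal P}$; $\sigma_{i,j}=\sigma_i\cdots\sigma_j$, $\sigma_{i,\infty}$ the suffix from $i$. LTL: $\phi ::= \mathit{tt}\mid\mathit{ff}\mid e\mid\neg e\mid\phi\wedge\phi\mid\phi\vee\phi\mid X\phi\mid\phi U\phi\mid G\phi$, standard infinite-trace semantics; co-safety: no $G$. Finite semantics of co-safety formulas on $\sigma_{i,j}$ ($j<\infty$): atoms/Booleans at position $i$; $X\varphi$ iff $j>i$ and $\sigma_{i+1,j}\vdash\varphi$; $\varphi U\psi$ iff some $l\in[i,j]$ has $\sigma_{l,j}\vdash\psi$ and $\sigma_{k,j}\vdash\varphi$ for $k\in[i,l)$. Tight satisfaction $\sigma_{i,j}\Vdash\varphi$: $\sigma_{i,j}\vdash\varphi$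 and $\sigma_{i,k}\not\vdash\varphi$ for all $i\le k<j$. Assumptions: $\alpha ::= \mathit{tt}\mid\mathit{ff}\mid a\mid\neg\alpha\mid\alpha\wedge\alpha\mid\alpha\vee\alpha$; $\beta ::= \alpha\mid X\alpha\mid\beta\wedge\beta\mid\beta\vee\beta$; $\gamma ::= G\beta\mid GF\alpha\mid\gamma\wedge\gamma$. Flagging monitor over $\Sigma=2^{{\cal P}_{in}}$: $D=\langle \Sigma, \mathbb{V}, \Theta, Q, \theta_0, q_0, F, \perp, \rightarrow\rangle$ with typed variables $\mathbb{V}$ (arbitrary domains), valuations $\Theta$, finite states $Q$, initial valuation $\theta_0$, initial state $q_0$, flagging states $F\subseteq Q\setminus\{q_0\}$, sink $\perp$, deterministic transitions $q\xrightarrow{g\mapsto a}q'$ ($q\ne\perp$), guards $g:\Sigma\times\Theta\to\{\mathit{true},\mathit{false}\}$, actions $a:\Sigma\times\Theta\to\Theta$. Semantics on $(q,\theta)$ reading $E$: (1) if $q\notin F\cup\{\perp\}$ and a transition from $q$ has true guard, take it and set the valuation to $a(E,\theta)$; (2) if $q\notin F\cup\{\perp\}$ and no guard holds, stay; (3) $\perp$ stays; (4) a state in $F$ moves to $\perp$. On traces over $2^{\cal P}$ the monitor reads $\sigma_i\cap{\cal P}_{in}$. $\sigma_{i,j}\Vdash D$ iff the run from $(q_0,\theta_0)$ on $\sigma_i,\dots,\sigma_j$ ends in $F$. Semantics of triggers: $\sigma_{i,\infty}\vdash D{:}\phi$ iff for all $j\ge i$, $\sigma_{i,j}\Vdash D$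 implies $\sigma_{j,\infty}\vdash\phi$. $\sigma_{i,k}\vdash D;\varphi$ iff some $j\in[i,k]$ has $\sigma_{i,j}\Vdash D$ and $\sigma_{j,k}\Vdash\varphi$. Restart points: $0$ is one; if $p$ is one and $\sigma_{p,k}\vdash D;\varphi$ then $k+1$ is one. $\sigma\vdash(D;\varphi)^*$ iff for every restart point $p$ and every $i\ge p$ with $\sigma_{p,i}\Vdash D$ there is $k\ge i$ with $\sigma_{p,k}\vdash D;\varphi$. $\sigma\vdash\gamma\rightarrow\pi'$ iff $\sigma\vdash\gamma$ implies $\sigma_{0,\infty}\vdash\pi'$. Mealy machine: $C=\langle S,s_0,2^{{\cal P}_{in}},2^{{\cal P}_{out}},\rightarrow,F\rangle$, complete deterministic $\rightarrow:S\times2^{{\cal P}_{in}}\to2^{{\cal P}_{out}}\times S$, accepting states $F$. A run $s_0s_1\cdots$ with $s_i\xrightarrow{I_i/O_i}s_{i+1}$ produces $w$ with $w_i=I_i\cup O_i$; $C$ accepts a prefix $u$ if $s_{|u|}\in F$. $C$ realises a formula if every produced word satisfies it. $C$ tightly realises $\gamma\rightarrow\varphi$ ($\varphi$ co-safety) if it realises it and for each produced $w$ with $w\vdash\gamma$ there is a prefix $u$ of $w$ accepted by $C$, tightly satisfying $\varphi$, with no strict prefix of $u$ accepted by $C$. *)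

theory Defs
  imports Main
begin

type_synonym 'p trace = "nat \<Rightarrow> 'p set"

datatype 'p ltl = TT | FF | Prop 'p | NProp 'p
  | And "'p ltl" "'p ltl" | Or "'p ltl" "'p ltl"
  | Next "'p ltl" | Until "'p ltl" "'p ltl" | Glob "'p ltl"

fun sat :: "'p trace \<Rightarrow> nat \<Rightarrow> 'p ltl \<Rightarrow> bool" where
  "sat s i TT = True"
| "sat s i FF = False"
| "sat s i (Prop e) = (e \<in> s i)"
| "sat s i (NProp e) = (e \<notin> s i)"
| "sat s i (And f g) = (sat s i f \<and> sat s i g)"
| "sat s i (Or f g) = (sat s i f \<or> sat s i g)"
| "sat s i (Next f) = sat s (Suc i) f"
| "sat s i (Until f g) = (\<exists>l\<ge>i. sat s l g \<and> (\<forall>k. i \<le> k \<and> k < l \<longrightarrow> sat s k f))"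
| "sat s i (Glob f) = (\<forall>k\<ge>i. sat s k f)"

fun cosafety :: "'p ltl \<Rightarrow> bool" where
  "cosafety (And f g) = (cosafety f \<and> cosafety g)"
| "cosafety (Or f g) = (cosafety f \<and> cosafety g)"
| "cosafety (Next f) = cosafety f"
| "cosafety (Until f g) = (cosafety f \<and> cosafety g)"
| "cosafety (Glob f) = False"
| "cosafety _ = True"

text \<open>Finite semantics on the segment s_i..s_j (only meaningful for co-safety formulas;
  G is outside the fragment and is given the value False).\<close>
fun fsat :: "'p trace \<Rightarrow> nat \<Rightarrow> nat \<Rightarrow> 'p ltl \<Rightarrow> bool" where
  "fsat s i j TT = True"
| "fsat s i j FF = False"
| "fsat s i j (Prop e) = (e \<in> s i)"
| "fsat s i j (NProp e) = (e \<notin> s i)"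
| "fsat s i j (And f g) = (fsat s i j f \<and> fsat s i j g)"
| "fsat s i j (Or f g) = (fsat s i j f \<or> fsat s i j g)"
| "fsat s i j (Next f) = (j > i \<and> fsat s (Suc i) j f)"
| "fsat s i j (Until f g) =
     (\<exists>l. i \<le> l \<and> l \<le> j \<and> fsat s l j g \<and> (\<forall>k. i \<le> k \<and> k < l \<longrightarrow> fsat s k j f))"
| "fsat s i j (Glob f) = False"

definition tsat :: "'p trace \<Rightarrow> nat \<Rightarrow> nat \<Rightarrow> 'p ltl \<Rightarrow> bool" where
  "tsat s i j f \<longleftrightarrow> i \<le> j \<and> fsat s i j f \<and> (\<forall>k. i \<le> k \<and> k < j \<longrightarrow> \<not> fsat s i k f)"

datatype 'p aprop = ATT | AFF | AAt 'p | ANot "'p aprop"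
  | AAnd "'p aprop" "'p aprop" | AOr "'p aprop" "'p aprop"

datatype 'p abeta = BProp "'p aprop" | BNext "'p aprop"
  | BAnd "'p abeta" "'p abeta" | BOr "'p abeta" "'p abeta"

datatype 'p agamma = GAlw "'p abeta" | GInf "'p aprop" | GAnd "'p agamma" "'p agamma"

fun asat :: "'p set \<Rightarrow> 'p aprop \<Rightarrow> bool" where
  "asat E ATT = True"
| "asat E AFF = False"
| "asat E (AAt a) = (a \<in> E)"
| "asat E (ANot f) = (\<not> asat E f)"
| "asat E (AAnd f g) = (asat E f \<and> asat E g)"
| "asat E (AOr f g) = (asat E f \<or> asat E g)"

fun bsat :: "'p trace \<Rightarrow> nat \<Rightarrow> 'p abeta \<Rightarrow> bool" where
  "bsat s i (BProp a) = asat (s i) a"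
| "bsat s i (BNext a) = asat (s (Suc i)) a"
| "bsat s i (BAnd f g) = (bsat s i f \<and> bsat s i g)"
| "bsat s i (BOr f g) = (bsat s i f \<or> bsat s i g)"

fun gsat :: "'p trace \<Rightarrow> 'p agamma \<Rightarrow> bool" where
  "gsat s (GAlw b) = (\<forall>i. bsat s i b)"
| "gsat s (GInf a) = (\<forall>i. \<exists>j\<ge>i. asat (s j) a)"
| "gsat s (GAnd f g) = (gsat s f \<and> gsat s g)"

fun aatoms :: "'p aprop \<Rightarrow> 'p set" where
  "aatoms (AAt a) = {a}"
| "aatoms (ANot f) = aatoms f"
| "aatoms (AAnd f g) = aatoms f \<union> aatoms g"
| "aatoms (AOr f g) = aatoms f \<union> aatoms g"
| "aatoms _ = {}"

fun batoms :: "'p abeta \<Rightarrow> 'p set" where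
  "batoms (BProp a) = aatoms a"
| "batoms (BNext a) = aatoms a"
| "batoms (BAnd f g) = batoms f \<union> batoms g"
| "batoms (BOr f g) = batoms f \<union> batoms g"

fun gatoms :: "'p agamma \<Rightarrow> 'p set" where
  "gatoms (GAlw b) = batoms b"
| "gatoms (GInf a) = aatoms a"
| "gatoms (GAnd f g) = gatoms f \<union> gatoms g"

text \<open>A transition (q, g, a, q') goes from q to q' with guard g and action a.
  Guards and actions take the letter (a subset of P_in) and the current valuation.\<close>
record ('q, 'v, 'p) monitor =
  mQ :: "'q set"
  mq0 :: 'q
  mth0 :: 'v
  mF :: "'q set"
  mbot :: 'q
  mtrans :: "('q \<times> ('p set \<Rightarrow> 'v \<Rightarrow> bool) \<times> ('p set \<Rightarrow> 'v \<Rightarrow> 'v) \<times> 'q) set"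

definition wf_monitor :: "'p set \<Rightarrow> ('q, 'v, 'p) monitor \<Rightarrow> bool" where
  "wf_monitor Pin D \<longleftrightarrow>
     finite (mQ D) \<and> mq0 D \<in> mQ D \<and> mbot D \<in> mQ D \<and>
     mF D \<subseteq> mQ D - {mq0 D} \<and> mbot D \<notin> mF D \<and>
     (\<forall>(q, g, a, q') \<in> mtrans D. q \<in> mQ D \<and> q' \<in> mQ D \<and> q \<noteq> mbot D) \<and>
     (\<forall>q E th t1 t2. E \<subseteq> Pin \<longrightarrow> t1 \<in> mtrans D \<longrightarrow> t2 \<in> mtrans D \<longrightarrow>
        fst t1 = q \<longrightarrow> fst t2 = q \<longrightarrow>
        fst (snd t1) E th \<longrightarrow> fst (snd t2) E th \<longrightarrow> t1 = t2)"

definition enabled :: "('q, 'v, 'p) monitor \<Rightarrow> 'q \<Rightarrow> 'p set \<Rightarrow> 'v \<Rightarrow>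
    ('q \<times> ('p set \<Rightarrow> 'v \<Rightarrow> bool) \<times> ('p set \<Rightarrow> 'v \<Rightarrow> 'v) \<times> 'q) \<Rightarrow> bool" where
  "enabled D q E th t \<longleftrightarrow> t \<in> mtrans D \<and> fst t = q \<and> fst (snd t) E th"

definition mstep :: "('q, 'v, 'p) monitor \<Rightarrow> 'p set \<Rightarrow> 'q \<times> 'v \<Rightarrow> 'q \<times> 'v" where
  "mstep D E c = (case c of (q, th) \<Rightarrow>
     if q = mbot D then (q, th)
     else if q \<in> mF D then (mbot D, th)
     else if (\<exists>t. enabled D q E th t) then
       (let t = (THE t. enabled D q E th t) in (snd (snd (snd t)), fst (snd (snd t)) E th))
     else (q, th))"

fun mconf :: "'p set \<Rightarrow> ('q, 'v, 'p) monitor \<Rightarrow> 'p trace \<Rightarrow> nat \<Rightarrow> nat \<Rightarrow> 'q \<times> 'v" where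
  "mconf Pin D s i 0 = (mq0 D, mth0 D)"
| "mconf Pin D s i (Suc n) = mstep D (s (i + n) \<inter> Pin) (mconf Pin D s i n)"

definition mflag :: "'p set \<Rightarrow> ('q, 'v, 'p) monitor \<Rightarrow> 'p trace \<Rightarrow> nat \<Rightarrow> nat \<Rightarrow> bool" where
  "mflag Pin D s i j \<longleftrightarrow> i \<le> j \<and> fst (mconf Pin D s i (Suc (j - i))) \<in> mF D"

definition trig_sat :: "'p set \<Rightarrow> ('q, 'v, 'p) monitor \<Rightarrow> 'p ltl \<Rightarrow> 'p trace \<Rightarrow> nat \<Rightarrow> bool" where
  "trig_sat Pin D f s i \<longleftrightarrow> (\<forall>j\<ge>i. mflag Pin D s i j \<longrightarrow> sat s j f)"

definition dseq :: "'p set \<Rightarrow> ('q, 'v, 'p) monitor \<Rightarrow> 'p ltl \<Rightarrow> 'p trace \<Rightarrow> nat \<Rightarrow> nat \<Rightarrow> bool" where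
  "dseq Pin D f s i k \<longleftrightarrow> (\<exists>j. i \<le> j \<and> j \<le> k \<and> mflag Pin D s i j \<and> tsat s j k f)"

inductive restart :: "'p set \<Rightarrow> ('q, 'v, 'p) monitor \<Rightarrow> 'p ltl \<Rightarrow> 'p trace \<Rightarrow> nat \<Rightarrow> bool"
  for Pin D f s where
  restart0: "restart Pin D f s 0"
| restartS: "restart Pin D f s p \<Longrightarrow> dseq Pin D f s p k \<Longrightarrow> restart Pin D f s (Suc k)"

definition rep_sat :: "'p set \<Rightarrow> ('q, 'v, 'p) monitor \<Rightarrow> 'p ltl \<Rightarrow> 'p trace \<Rightarrow> bool" where
  "rep_sat Pin D f s \<longleftrightarrow>
     (\<forall>p i. restart Pin D f s p \<longrightarrow> p \<le> i \<longrightarrow> mflag Pin D s p i \<longrightarrow>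
        (\<exists>k\<ge>i. dseq Pin D f s p k))"

text \<open>States are the elements of the state type; the transition function is total
  (complete and deterministic).\<close>
record ('s, 'p) mealy =
  ms0 :: 's
  mdelta :: "'s \<Rightarrow> 'p set \<Rightarrow> 'p set \<times> 's"
  macc :: "'s set"

definition wf_mealy :: "'p set \<Rightarrow> 'p set \<Rightarrow> ('s, 'p) mealy \<Rightarrow> bool" where
  "wf_mealy Pin Pout C \<longleftrightarrow> (\<forall>s I. I \<subseteq> Pin \<longrightarrow> fst (mdelta C s I) \<subseteq> Pout)"

fun mstates :: "('s, 'p) mealy \<Rightarrow> 'p trace \<Rightarrow> nat \<Rightarrow> 's" where
  "mstates C I 0 = ms0 C"
| "mstates C I (Suc n) = snd (mdelta C (mstates C I n) (I n))"

definition mword :: "('s, 'p) mealy \<Rightarrow> 'p trace \<Rightarrow> 'p trace" where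
  "mword C I n = I n \<union> fst (mdelta C (mstates C I n) (I n))"

definition realises :: "'p set \<Rightarrow> ('s, 'p) mealy \<Rightarrow> ('p trace \<Rightarrow> bool) \<Rightarrow> bool" where
  "realises Pin C P \<longleftrightarrow> (\<forall>I. (\<forall>n. I n \<subseteq> Pin) \<longrightarrow> P (mword C I))"

text \<open>Tight realisation of gamma -> phi: the accepted prefix is w_0..w_n (states s_(n+1)),
  and no strict prefix (lengths 0..n, i.e. states s_0..s_n) is accepted.\<close>
definition tightly_realises :: "'p set \<Rightarrow> ('s, 'p) mealy \<Rightarrow> 'p agamma \<Rightarrow> 'p ltl \<Rightarrow> bool" where
  "tightly_realises Pin C g f \<longleftrightarrow>
     realises Pin C (\<lambda>w. gsat w g \<longrightarrow> sat w 0 f) \<and>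
     (\<forall>I. (\<forall>n. I n \<subseteq> Pin) \<longrightarrow> gsat (mword C I) g \<longrightarrow>
        (\<exists>n. mstates C I (Suc n) \<in> macc C \<and> tsat (mword C I) 0 n f \<and>
             (\<forall>m\<le>n. mstates C I m \<notin> macc C)))"

end

theory Submission
  imports Defs
begin

lemma asat_cong: "(\<forall>x\<in>aatoms a. x \<in> E \<longleftrightarrow> x \<in> E') \<Longrightarrow> asat E a = asat E' a"
  by (induction a) auto

lemma bsat_cong: "(\<forall>n. \<forall>x\<in>batoms b. x \<in> w n \<longleftrightarrow> x \<in> w' n) \<Longrightarrow> bsat w i b = bsat w' i b"
proof (induction b arbitrary: i)
  case (BProp a) then show ?case using asat_cong[of a "w i" "w' i"] by simp
next
  case (BNext a) then show ?case using asat_cong[of a "w (Suc i)" "w' (Suc i)"] by simp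
qed auto

lemma gsat_cong: "(\<forall>n. \<forall>x\<in>gatoms g. x \<in> w n \<longleftrightarrow> x \<in> w' n) \<Longrightarrow> gsat w g = gsat w' g"
proof (induction g)
  case (GAlw b) then show ?case using bsat_cong[of b w w'] by simp
next
  case (GInf a)
  have "\<And>j. asat (w j) a = asat (w' j) a" using GInf asat_cong[of a] by simp
  then show ?case by simp
next
  case (GAnd g1 g2)
  then show ?case by simp
qed

lemma bsat_shift: "bsat (\<lambda>k. w (d + k)) i b = bsat w (d + i) b"
  by (induction b) auto

lemma all_shift: "(\<forall>k\<ge>i. P (d + k)) = (\<forall>k\<ge>d + i. P (k::nat))"
proof
  assume h: "\<forall>k\<ge>i. P (d + k)"
  show "\<forall>k\<ge>d + i. P k"
  proof (intro allI impI)
    fix k :: nat assume k: "d + i \<le> k"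
    then have "i \<le> k - d" by simp
    then have "P (d + (k - d))" using h by blast
    moreover have "d + (k - d) = k" using k by simp
    ultimately show "P k" by simp
  qed
next
  assume h: "\<forall>k\<ge>d + i. P k"
  show "\<forall>k\<ge>i. P (d + k)"
  proof (intro allI impI)
    fix k :: nat assume "i \<le> k"
    then have "d + i \<le> d + k" by simp
    then show "P (d + k)" using h by blast
  qed
qed

lemma ex_shift: "(\<exists>l. i \<le> l \<and> R (d + l) \<and> P (d + l) \<and> (\<forall>k. i \<le> k \<and> k < l \<longrightarrow> Q (d + k)))
   = (\<exists>l. d + i \<le> l \<and> R l \<and> P l \<and> (\<forall>k. d + i \<le> k \<and> k < l \<longrightarrow> Q (k::nat)))"
proof
  assume "\<exists>l. i \<le> l \<and> R (d + l) \<and> P (d + l) \<and> (\<forall>k. i \<le> k \<and> k < l \<longrightarrow> Q (d + k))"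
  then obtain l where l: "i \<le> l" "R (d + l)" "P (d + l)" "\<forall>k. i \<le> k \<and> k < l \<longrightarrow> Q (d + k)"
    by blast
  have "\<forall>k. d + i \<le> k \<and> k < d + l \<longrightarrow> Q k"
  proof (intro allI impI)
    fix k assume k: "d + i \<le> k \<and> k < d + l"
    then have "i \<le> k - d \<and> k - d < l" by auto
    then have "Q (d + (k - d))" using l(4) by blast
    moreover have "d + (k - d) = k" using k by simp
    ultimately show "Q k" by simp
  qed
  moreover have "d + i \<le> d + l" using l(1) by simp
  ultimately show "\<exists>l. d + i \<le> l \<and> R l \<and> P l \<and> (\<forall>k. d + i \<le> k \<and> k < l \<longrightarrow> Q k)"
    using l(2,3) by blast
next
  assume "\<exists>l. d + i \<le> l \<and> R l \<and> P l \<and> (\<forall>k. d + i \<le> k \<and> k < l \<longrightarrow> Q k)"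
  then obtain l where l: "d + i \<le> l" "R l" "P l" "\<forall>k. d + i \<le> k \<and> k < l \<longrightarrow> Q k"
    by blast
  have e: "d + (l - d) = l" using l(1) by simp
  have "\<forall>k. i \<le> k \<and> k < l - d \<longrightarrow> Q (d + k)"
  proof (intro allI impI)
    fix k assume k: "i \<le> k \<and> k < l - d"
    then have "d + i \<le> d + k \<and> d + k < l" by auto
    then show "Q (d + k)" using l(4) by blast
  qed
  moreover have "i \<le> l - d" using l(1) by simp
  moreover have "R (d + (l - d))" "P (d + (l - d))" using l(2,3) e by simp_all
  ultimately show "\<exists>l. i \<le> l \<and> R (d + l) \<and> P (d + l) \<and> (\<forall>k. i \<le> k \<and> k < l \<longrightarrow> Q (d + k))"
    by blast
qed

lemma gsat_shift: "gsat w g \<Longrightarrow> gsat (\<lambda>k. w (d + k)) g"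
proof (induction g)
  case (GAlw b) then show ?case by (simp add: bsat_shift)
next
  case (GInf a)
  show ?case
  proof (simp only: gsat.simps, intro allI)
    fix i
    obtain j where j: "j \<ge> d + i" "asat (w j) a" using GInf by (simp only: gsat.simps) blast
    then have "i \<le> j - d" "d + (j - d) = j" by simp_all
    then show "\<exists>j\<ge>i. asat (w (d + j)) a" using j(2) by (intro exI[of _ "j - d"]) simp
  qed
next
  case (GAnd g1 g2) then show ?case by simp
qed

lemma sat_shift: "sat (\<lambda>k. w (d + k)) i f = sat w (d + i) f"
proof (induction f arbitrary: i)
  case (Until f1 f2)
  have "sat (\<lambda>k. w (d + k)) i (Until f1 f2) =
    (\<exists>l. i \<le> l \<and> True \<and> sat w (d + l) f2 \<and> (\<forall>k. i \<le> k \<and> k < l \<longrightarrow> sat w (d + k) f1))"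
    using Until.IH by simp
  also have "\<dots> = (\<exists>l. d + i \<le> l \<and> True \<and> sat w l f2 \<and> (\<forall>k. d + i \<le> k \<and> k < l \<longrightarrow> sat w k f1))"
    by (rule ex_shift[where R = "\<lambda>_. True"])
  finally show ?case by simp
next
  case (Glob f)
  have "sat (\<lambda>k. w (d + k)) i (Glob f) = (\<forall>k\<ge>i. sat w (d + k) f)" using Glob.IH by simp
  also have "\<dots> = (\<forall>k\<ge>d + i. sat w k f)" by (rule all_shift)
  finally show ?case by simp
qed simp_all

lemma fsat_shift: "fsat (\<lambda>k. w (d + k)) a b f = fsat w (d + a) (d + b) f"
proof (induction f arbitrary: a)
  case (Until f1 f2)
  have "fsat (\<lambda>k. w (d + k)) a b (Until f1 f2) =
    (\<exists>l. a \<le> l \<and> (d + l \<le> d + b) \<and> fsat w (d + l) (d + b) f2 \<and> (\<forall>k. a \<le> k \<and> k < l \<longrightarrow> fsat w (d + k) (d + b) f1))"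
    using Until.IH by simp
  also have "\<dots> = (\<exists>l. d + a \<le> l \<and> l \<le> d + b \<and> fsat w l (d + b) f2 \<and> (\<forall>k. d + a \<le> k \<and> k < l \<longrightarrow> fsat w k (d + b) f1))"
    by (rule ex_shift[where R = "\<lambda>l. l \<le> d + b"])
  finally show ?case by simp
next
  case (Next f)
  then show ?case by simp
qed simp_all

lemma fsat_cong: "i \<le> j \<Longrightarrow> (\<forall>x. i \<le> x \<and> x \<le> j \<longrightarrow> w x = w' x) \<Longrightarrow> fsat w i j f = fsat w' i j f"
proof (induction f arbitrary: i)
  case (Until f1 f2)
  have B1: "\<And>l. i \<le> l \<Longrightarrow> l \<le> j \<Longrightarrow> fsat w l j f2 = fsat w' l j f2" using Until.IH(2) Until.prems by auto
  have B2: "\<And>l. i \<le> l \<Longrightarrow> l \<le> j \<Longrightarrow> fsat w l j f1 = fsat w' l j f1" using Until.IH(1) Until.prems by auto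
  have A: "\<And>l k. i \<le> k \<Longrightarrow> k < l \<Longrightarrow> l \<le> j \<Longrightarrow> fsat w k j f1 = fsat w' k j f1"
    using B2 by simp
  show ?case unfolding fsat.simps
  proof (intro iffI; elim exE conjE)
    fix l assume h: "i \<le> l" "l \<le> j" "fsat w l j f2" "\<forall>k. i \<le> k \<and> k < l \<longrightarrow> fsat w k j f1"
    have "fsat w' l j f2" using B1 h by simp
    moreover have "\<forall>k. i \<le> k \<and> k < l \<longrightarrow> fsat w' k j f1" using A h by auto
    ultimately show "\<exists>l. i \<le> l \<and> l \<le> j \<and> fsat w' l j f2 \<and> (\<forall>k. i \<le> k \<and> k < l \<longrightarrow> fsat w' k j f1)"
      using h by blast
  next
    fix l assume h: "i \<le> l" "l \<le> j" "fsat w' l j f2" "\<forall>k. i \<le> k \<and> k < l \<longrightarrow> fsat w' k j f1"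
    have "fsat w l j f2" using B1 h by simp
    moreover have "\<forall>k. i \<le> k \<and> k < l \<longrightarrow> fsat w k j f1" using A h by auto
    ultimately show "\<exists>l. i \<le> l \<and> l \<le> j \<and> fsat w l j f2 \<and> (\<forall>k. i \<le> k \<and> k < l \<longrightarrow> fsat w k j f1)"
      using h by blast
  qed
next
  case (Next f)
  show ?case
  proof (cases "i < j")
    case True
    then have "fsat w (Suc i) j f = fsat w' (Suc i) j f"
      using Next.IH[of "Suc i"] Next.prems(2) by simp
    then show ?thesis by simp
  next
    case False
    then show ?thesis by simp
  qed
next
  case (Prop e)
  then have "w i = w' i" by simp
  then show ?case by simp
next
  case (NProp e)
  then have "w i = w' i" by simp
  then show ?case by simp
qed simp_all


definition cstep :: "('q, 'v, 'p) monitor \<Rightarrow> ('s, 'p) mealy \<Rightarrow> 's set \<Rightarrow> 'q \<times> 'v \<Rightarrow> 's \<Rightarrow> 'p set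
    \<Rightarrow> 'p set \<times> (('q \<times> 'v) \<times> 's \<times> bool)" where
  "cstep D C A c x E = (fst (mdelta C x E),
     if snd (mdelta C x E) \<in> A then ((mq0 D, mth0 D), snd (mdelta C x E), False)
     else (c, snd (mdelta C x E), True))"

definition Mdelta :: "'p set \<Rightarrow> ('q, 'v, 'p) monitor \<Rightarrow> ('s, 'p) mealy \<Rightarrow> 's set
    \<Rightarrow> ('q \<times> 'v) \<times> 's \<times> bool \<Rightarrow> 'p set \<Rightarrow> 'p set \<times> (('q \<times> 'v) \<times> 's \<times> bool)" where
  "Mdelta Pin D C A st E = (if snd (snd st) then cstep D C A (fst st) (fst (snd st)) E
     else if fst (mstep D (E \<inter> Pin) (fst st)) \<in> mF D
       then cstep D C A (mstep D (E \<inter> Pin) (fst st)) (ms0 C) E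
     else ({}, (mstep D (E \<inter> Pin) (fst st), fst (snd st), False)))"

definition Mk :: "'p set \<Rightarrow> ('q, 'v, 'p) monitor \<Rightarrow> ('s, 'p) mealy \<Rightarrow> 's set
    \<Rightarrow> (('q \<times> 'v) \<times> 's \<times> bool, 'p) mealy" where
  "Mk Pin D C A = \<lparr>ms0 = ((mq0 D, mth0 D), ms0 C, False), mdelta = Mdelta Pin D C A, macc = {}\<rparr>"

lemma wf_Mk: "wf_mealy Pin Pout C \<Longrightarrow> wf_mealy Pin Pout (Mk Pin D C A)"
  unfolding wf_mealy_def Mk_def Mdelta_def cstep_def by auto

lemma word_in: "Pin \<inter> Pout = {} \<Longrightarrow> wf_mealy Pin Pout M \<Longrightarrow> \<forall>n. I n \<subseteq> Pin \<Longrightarrow> mword M I n \<inter> Pin = I n"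
  unfolding wf_mealy_def mword_def by blast

lemma gsat_in: "gatoms g \<subseteq> Pin \<Longrightarrow> (\<forall>n. w n \<inter> Pin = I n) \<Longrightarrow> gsat w g = gsat I g"
  by (rule gsat_cong) auto

lemma mconf_cong: "(\<forall>n. w n \<inter> Pin = w' n \<inter> Pin) \<Longrightarrow> mconf Pin D w p n = mconf Pin D w' p n"
  by (induction n) auto

lemma mstep_F: "fst c \<in> mF D \<or> fst c = mbot D \<Longrightarrow> fst (mstep D E c) = mbot D"
  by (cases c) (auto simp: mstep_def)

lemma bot_stays: "fst (mconf Pin D s p n) \<in> mF D \<Longrightarrow> n < k \<Longrightarrow> fst (mconf Pin D s p k) = mbot D"
proof (induction k)
  case 0 then show ?case by simp
next
  case (Suc k)
  then have "fst (mconf Pin D s p k) \<in> mF D \<or> fst (mconf Pin D s p k) = mbot D"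
    by (cases "n = k") auto
  then show ?case by (simp add: mstep_F)
qed

lemma flag_first: "wf_monitor Pin D \<Longrightarrow> fst (mconf Pin D s p (Suc n)) \<in> mF D \<Longrightarrow> m < n
   \<Longrightarrow> fst (mconf Pin D s p (Suc m)) \<notin> mF D"
  using bot_stays[of Pin D s p "Suc m" "Suc n"] unfolding wf_monitor_def by auto

lemma phaseB:
  assumes "mstates (Mk Pin D C A) I p = ((mq0 D, mth0 D), x, False)"
  shows "(\<forall>m'<m. fst (mconf Pin D I p (Suc m')) \<notin> mF D) \<Longrightarrow>
     \<exists>x'. mstates (Mk Pin D C A) I (p + m) = (mconf Pin D I p m, x', False)"
proof (induction m)
  case 0 then show ?case using assms by simp
next
  case (Suc m)
  then obtain x' where h: "mstates (Mk Pin D C A) I (p + m) = (mconf Pin D I p m, x', False)" by auto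
  have nF: "fst (mconf Pin D I p (Suc m)) \<notin> mF D" using Suc.prems by auto
  have "mstates (Mk Pin D C A) I (p + Suc m) = snd (mdelta (Mk Pin D C A) (mstates (Mk Pin D C A) I (p + m)) (I (p + m)))"
    by simp
  also have "\<dots> = (mconf Pin D I p (Suc m), x', False)"
    unfolding h using nF by (simp add: Mk_def Mdelta_def)
  finally show ?case by blast
qed

lemma phaseC:
  assumes st: "mstates (Mk Pin D C A) I i = (c, x, False)"
    and fl: "fst (mstep D (I i \<inter> Pin) c) \<in> mF D"
  shows "(\<forall>m'<m. mstates C (\<lambda>k. I (i + k)) (Suc m') \<notin> A) \<Longrightarrow>
    (\<exists>c'. mstates (Mk Pin D C A) I (i + Suc m) =
       (if mstates C (\<lambda>k. I (i + k)) (Suc m) \<in> A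
        then ((mq0 D, mth0 D), mstates C (\<lambda>k. I (i + k)) (Suc m), False)
        else (c', mstates C (\<lambda>k. I (i + k)) (Suc m), True)))
    \<and> mword (Mk Pin D C A) I (i + m) = mword C (\<lambda>k. I (i + k)) m"
proof (induction m)
  case 0
  have "mstates (Mk Pin D C A) I (i + Suc 0) = snd (mdelta (Mk Pin D C A) (mstates (Mk Pin D C A) I i) (I i))"
    by simp
  moreover have "mword (Mk Pin D C A) I (i + 0) = I i \<union> fst (mdelta (Mk Pin D C A) (mstates (Mk Pin D C A) I i) (I i))"
    by (simp add: mword_def)
  ultimately show ?case unfolding st using fl by (simp add: Mk_def Mdelta_def cstep_def mword_def)
next
  case (Suc m)
  let ?I = "\<lambda>k. I (i + k)"
  have nA: "mstates C ?I (Suc m) \<notin> A" using Suc.prems by auto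
  from Suc obtain c' where h: "mstates (Mk Pin D C A) I (i + Suc m) = (c', mstates C ?I (Suc m), True)"
    using nA by auto
  have "mstates (Mk Pin D C A) I (i + Suc (Suc m)) = snd (mdelta (Mk Pin D C A) (mstates (Mk Pin D C A) I (i + Suc m)) (I (i + Suc m)))"
    by simp
  moreover have "mword (Mk Pin D C A) I (i + Suc m) = I (i + Suc m) \<union> fst (mdelta (Mk Pin D C A) (mstates (Mk Pin D C A) I (i + Suc m)) (I (i + Suc m)))"
    by (simp add: mword_def)
  moreover have "mstates C ?I (Suc (Suc m)) = snd (mdelta C (mstates C ?I (Suc m)) (I (i + Suc m)))"
    by simp
  moreover have "mword C ?I (Suc m) = I (i + Suc m) \<union> fst (mdelta C (mstates C ?I (Suc m)) (I (i + Suc m)))"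
    by (simp add: mword_def)
  ultimately show ?case unfolding h by (simp add: Mk_def Mdelta_def cstep_def)
qed

lemma part1:
  assumes disj: "Pin \<inter> Pout = {}" and gat: "gatoms g \<subseteq> Pin"
    and wfD: "wf_monitor Pin D" and wfC: "wf_mealy Pin Pout C"
    and real: "realises Pin C (\<lambda>w. gsat w g \<longrightarrow> sat w 0 f)"
  shows "realises Pin (Mk Pin D C {}) (\<lambda>w. gsat w g \<longrightarrow> trig_sat Pin D f w 0)"
  unfolding realises_def
proof (intro allI impI)
  fix I :: "'a trace" assume I: "\<forall>n. I n \<subseteq> Pin"
  let ?M = "Mk Pin D C {}"
  let ?w = "mword ?M I"
  assume gw: "gsat ?w g"
  have wI: "\<forall>n. ?w n \<inter> Pin = I n" using word_in[OF disj wf_Mk[OF wfC] I] by blast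
  have gI: "gsat I g" using gw gsat_in[OF gat wI] by simp
  show "trig_sat Pin D f ?w 0"
    unfolding trig_sat_def
  proof (intro allI impI)
    fix j assume "0 \<le> j" and fl: "mflag Pin D ?w 0 j"
    have wI2: "\<forall>n. ?w n \<inter> Pin = I n \<inter> Pin" using wI I by (simp add: Int_absorb2)
    have mc: "\<And>n. mconf Pin D ?w 0 n = mconf Pin D I 0 n"
      by (rule mconf_cong[OF wI2])
    have F0: "0 \<le> j \<and> fst (mconf Pin D ?w 0 (Suc (j - 0))) \<in> mF D" using fl unfolding mflag_def .
    have F: "fst (mconf Pin D I 0 (Suc j)) \<in> mF D" using F0 by (simp only: mc diff_zero)
    have nF: "\<forall>m'<j. fst (mconf Pin D I 0 (Suc m')) \<notin> mF D"
      using flag_first[OF wfD F] by blast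
    have st00: "mstates ?M I 0 = ((mq0 D, mth0 D), ms0 C, False)" by (simp add: Mk_def)
    obtain x' where st0: "mstates ?M I (0 + j) = (mconf Pin D I 0 j, x', False)"
      using phaseB[OF st00 nF] by blast
    have st: "mstates ?M I j = (mconf Pin D I 0 j, x', False)" using st0 by (simp only: add_0)
    have F2: "fst (mstep D (I j \<inter> Pin) (mconf Pin D I 0 j)) \<in> mF D"
      using F by (simp only: mconf.simps(2) add_0)
    let ?I = "\<lambda>k. I (j + k)"
    have eq: "?w (j + m) = mword C ?I m" for m
    proof -
      have "\<forall>m'<m. mstates C ?I (Suc m') \<notin> {}" by simp
      from phaseC[OF st F2 this] show ?thesis by (rule conjunct2)
    qed
    have I': "\<forall>n. ?I n \<subseteq> Pin" using I by simp
    have "gsat ?I g" using gsat_shift[OF gI] .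
    moreover have "gsat (mword C ?I) g = gsat ?I g"
      by (rule gsat_in[OF gat]) (intro allI, rule word_in[OF disj wfC I'])
    moreover have R: "\<And>J. (\<forall>n. J n \<subseteq> Pin) \<Longrightarrow> gsat (mword C J) g \<Longrightarrow> sat (mword C J) 0 f"
      using real unfolding realises_def by blast
    ultimately have S: "sat (mword C ?I) 0 f" using R[OF I'] by simp
    have FE: "mword C ?I = (\<lambda>k. ?w (j + k))" by (rule ext, rule eq[symmetric])
    have "sat (\<lambda>k. ?w (j + k)) 0 f" using S unfolding FE .
    then have "sat ?w (j + 0) f" unfolding sat_shift .
    then show "sat ?w j f" by (simp only: add_0_right)
  qed
qed

lemma part2:
  assumes disj: "Pin \<inter> Pout = {}" and gat: "gatoms g \<subseteq> Pin"
    and wfD: "wf_monitor Pin D" and wfC: "wf_mealy Pin Pout C"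
    and tight: "tightly_realises Pin C g f"
  shows "realises Pin (Mk Pin D C (macc C)) (\<lambda>w. gsat w g \<longrightarrow> rep_sat Pin D f w)"
  unfolding realises_def
proof (intro allI impI)
  fix I :: "'a trace" assume I: "\<forall>n. I n \<subseteq> Pin"
  let ?M = "Mk Pin D C (macc C)"
  let ?w = "mword ?M I"
  assume gw: "gsat ?w g"
  have wI: "\<forall>n. ?w n \<inter> Pin = I n" using word_in[OF disj wf_Mk[OF wfC] I] by blast
  have gI: "gsat I g" using gw gsat_in[OF gat wI] by simp
  have wI2: "\<forall>n. ?w n \<inter> Pin = I n \<inter> Pin" using wI I by (simp add: Int_absorb2)
  have mc: "\<And>p n. mconf Pin D ?w p n = mconf Pin D I p n"
    by (rule mconf_cong[OF wI2])
  have K: "\<exists>n. tsat ?w i (i + n) f \<and> (\<forall>k'. tsat ?w i k' f \<longrightarrow> k' = i + n)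
       \<and> (\<exists>x. mstates ?M I (Suc (i + n)) = ((mq0 D, mth0 D), x, False))"
    if fr: "mstates ?M I p = ((mq0 D, mth0 D), x, False)" and fl: "mflag Pin D ?w p i" for p i x
  proof -
    have F0: "p \<le> i \<and> fst (mconf Pin D ?w p (Suc (i - p))) \<in> mF D" using fl unfolding mflag_def .
    have pi: "p \<le> i" using F0 by blast
    have F: "fst (mconf Pin D I p (Suc (i - p))) \<in> mF D" using F0 by (simp only: mc)
    have e: "p + (i - p) = i" using pi by simp
    have "\<forall>m'<i - p. fst (mconf Pin D I p (Suc m')) \<notin> mF D"
      using flag_first[OF wfD F] by blast
    then obtain x' where st0: "mstates ?M I (p + (i - p)) = (mconf Pin D I p (i - p), x', False)"
      using phaseB[OF fr] by blast
    have st: "mstates ?M I i = (mconf Pin D I p (i - p), x', False)" using st0 by (simp only: e)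
    have F2: "fst (mstep D (I i \<inter> Pin) (mconf Pin D I p (i - p))) \<in> mF D"
      using F by (simp only: mconf.simps(2) e)
    let ?I = "\<lambda>k. I (i + k)"
    let ?Cw = "mword C ?I"
    have I': "\<forall>n. ?I n \<subseteq> Pin" using I by simp
    have "gsat ?I g" using gsat_shift[OF gI] .
    moreover have "gsat ?Cw g = gsat ?I g"
      by (rule gsat_in[OF gat]) (intro allI, rule word_in[OF disj wfC I'])
    ultimately have G: "gsat ?Cw g" by simp
    have TT: "\<forall>J. (\<forall>n. J n \<subseteq> Pin) \<longrightarrow> gsat (mword C J) g \<longrightarrow>
        (\<exists>n. mstates C J (Suc n) \<in> macc C \<and> tsat (mword C J) 0 n f \<and> (\<forall>m\<le>n. mstates C J m \<notin> macc C))"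
      using tight unfolding tightly_realises_def by (rule conjunct2)
    have "\<exists>n. mstates C ?I (Suc n) \<in> macc C \<and> tsat ?Cw 0 n f \<and> (\<forall>m\<le>n. mstates C ?I m \<notin> macc C)"
      using mp[OF mp[OF spec[OF TT, of ?I] I'] G] .
    then obtain n where acc: "mstates C ?I (Suc n) \<in> macc C" and ts: "tsat ?Cw 0 n f"
      and nacc: "\<forall>m\<le>n. mstates C ?I m \<notin> macc C"
      by blast
    have PC: "\<And>m. m \<le> n \<Longrightarrow> (\<exists>c'. mstates ?M I (i + Suc m) =
       (if mstates C ?I (Suc m) \<in> macc C
        then ((mq0 D, mth0 D), mstates C ?I (Suc m), False)
        else (c', mstates C ?I (Suc m), True)))
      \<and> ?w (i + m) = ?Cw m"
    proof -
      fix m assume "m \<le> n"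
      have "\<forall>m'<m. mstates C ?I (Suc m') \<notin> macc C"
      proof (intro allI impI)
        fix m' assume "m' < m"
        then have "Suc m' \<le> n" using \<open>m \<le> n\<close> by simp
        then show "mstates C ?I (Suc m') \<notin> macc C" using nacc by blast
      qed
      then show "?thesis m" using phaseC[OF st F2] by blast
    qed
    have PCw: "?w (i + m) = ?Cw m" if "m \<le> n" for m using PC[OF that] by blast
    have fr2: "\<exists>x. mstates ?M I (Suc (i + n)) = ((mq0 D, mth0 D), x, False)"
      using PC[of n] acc by auto
    have fs: "fsat ?w i (i + m) f = fsat ?Cw 0 m f" if "m \<le> n" for m
    proof -
      have "fsat ?w i (i + m) f = fsat (\<lambda>k. ?w (i + k)) 0 m f" using fsat_shift[of ?w i 0 m f] by simp
      also have "\<dots> = fsat ?Cw 0 m f"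
        by (rule fsat_cong) (use that in \<open>auto intro!: PCw\<close>)
      finally show ?thesis .
    qed
    have T: "tsat ?w i (i + n) f"
      unfolding tsat_def
    proof (intro conjI allI impI)
      show "fsat ?w i (i + n) f" using fs[of n] ts unfolding tsat_def by simp
    next
      fix k assume k: "i \<le> k \<and> k < i + n"
      then have "k - i \<le> n" by arith
      then have "fsat ?w i (i + (k - i)) f = fsat ?Cw 0 (k - i) f" by (rule fs)
      moreover have "\<not> fsat ?Cw 0 (k - i) f" using ts k unfolding tsat_def by auto
      moreover have "i + (k - i) = k" using k by simp
      ultimately show "\<not> fsat ?w i k f" by simp
    qed simp
    have U: "k' = i + n" if "tsat ?w i k' f" for k'
    proof (rule ccontr)
      assume ne: "k' \<noteq> i + n"
      show False
      proof (cases "k' < i + n")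
        case True
        have ik: "i \<le> k'" using that unfolding tsat_def by blast
        then have lt: "k' - i < n" using True by simp
        then have "k' - i \<le> n" by simp
        then have "fsat ?w i (i + (k' - i)) f = fsat ?Cw 0 (k' - i) f" by (rule fs)
        moreover have "\<not> fsat ?Cw 0 (k' - i) f" using ts lt unfolding tsat_def by blast
        moreover have "i + (k' - i) = k'" using that unfolding tsat_def by simp
        ultimately show False using that unfolding tsat_def by simp
      next
        case False
        then have "i + n < k'" using ne by simp
        then show False using that T unfolding tsat_def by auto
      qed
    qed
    show ?thesis using T U fr2 by blast
  qed
  have fresh: "\<exists>x. mstates ?M I p = ((mq0 D, mth0 D), x, False)" if "restart Pin D f ?w p" for p
    using that
  proof (induction rule: restart.induct)
    case restart0 then show ?case by (simp add: Mk_def)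
  next
    case (restartS p k)
    then obtain x where fr: "mstates ?M I p = ((mq0 D, mth0 D), x, False)" by blast
    from restartS.hyps(2) obtain j where j: "p \<le> j" "j \<le> k" "mflag Pin D ?w p j" "tsat ?w j k f"
      unfolding dseq_def by blast
    from K[OF fr j(3)] obtain n where "\<forall>k'. tsat ?w j k' f \<longrightarrow> k' = j + n"
      "\<exists>x. mstates ?M I (Suc (j + n)) = ((mq0 D, mth0 D), x, False)" by blast
    then show ?case using j(4) by auto
  qed
  show "rep_sat Pin D f ?w"
    unfolding rep_sat_def
  proof (intro allI impI)
    fix p i assume r: "restart Pin D f ?w p" and "p \<le> i" and fl: "mflag Pin D ?w p i"
    obtain x where fr: "mstates ?M I p = ((mq0 D, mth0 D), x, False)" using fresh[OF r] by blast
    from K[OF fr fl] obtain n where "tsat ?w i (i + n) f" by blast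
    then have "dseq Pin D f ?w p (i + n)" unfolding dseq_def using fl \<open>p \<le> i\<close> by auto
    then show "\<exists>k\<ge>i. dseq Pin D f ?w p k" by (intro exI[of _ "i + n"]) simp
  qed
qed

theorem theorem4:
  fixes Pin Pout :: "'p set"
    and g :: "'p agamma"
    and D :: "('q, 'v, 'p) monitor"
    and C :: "('s, 'p) mealy"
    and f :: "'p ltl"
  assumes "Pin \<inter> Pout = {}"
    and "gatoms g \<subseteq> Pin"
    and "wf_monitor Pin D"
    and "wf_mealy Pin Pout C"
  shows "(realises Pin C (\<lambda>w. gsat w g \<longrightarrow> sat w 0 f) \<longrightarrow>
            (\<exists>M :: (('q \<times> 'v) \<times> 's \<times> bool, 'p) mealy. wf_mealy Pin Pout M \<and>
               realises Pin M (\<lambda>w. gsat w g \<longrightarrow> trig_sat Pin D f w 0)))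
       \<and> (cosafety f \<longrightarrow> tightly_realises Pin C g f \<longrightarrow>
            (\<exists>M :: (('q \<times> 'v) \<times> 's \<times> bool, 'p) mealy. wf_mealy Pin Pout M \<and>
               realises Pin M (\<lambda>w. gsat w g \<longrightarrow> rep_sat Pin D f w)))"
  using part1[OF assms] part2[OF assms] wf_Mk[OF assms(4)] by blast

end
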